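(* Let $\mathcal{C}$ be an $[n,k]_q$ MWS code satisfying property (A). Then $$n\ge\left\lceil\frac{q^{k+2}-3q+2}{4(q-1)}\right\rceil.$$
   Context: Fix a primitive element $\alpha$ of $\mathbb{F}_q$. An $[n,k]_q$ code is a $k$-dimensional subspace of $\mathbb{F}_q^n$ (non-degenerate if $k\ge 2$); it is MWS if it has exactly $\frac{q^k-1}{q-1}$ distinct non-zero Hamming weights. For $c\in\mathbb{F}_q^n$ and $\beta\in\mathbb{F}_q$, $c[\beta]=|\{l:c_l=\beta\}|$. Property (A): there exists $\beta\in\mathbb{F}_q^*$ such that for $a,b\in\mathcal{C}$, $a[\beta]=b[\beta]$ only if $a=b$. *)

theory Defs
  imports "HOL-Analysis.Analysis"
begin

text \<open>Linear codes over a finite field 'a (so q = CARD('a)); vectors are 'a^'n with n = CARD('n).\<close>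

definition hweight :: "'a::zero ^ 'n \<Rightarrow> nat" where
  "hweight c = card {i. c $ i \<noteq> 0}"

definition symcount :: "'a ^ 'n \<Rightarrow> 'a \<Rightarrow> nat" where
  "symcount c \<beta> = card {i. c $ i = \<beta>}"

definition linear_code :: "('a::field ^ 'n) set \<Rightarrow> nat \<Rightarrow> bool" where
  "linear_code C k \<longleftrightarrow> vec.subspace C \<and> vec.dim C = k"

definition nondegenerate :: "('a::zero ^ 'n) set \<Rightarrow> bool" where
  "nondegenerate C \<longleftrightarrow> (\<forall>i. \<exists>c\<in>C. c $ i \<noteq> 0)"

definition MWS :: "('a::{finite,field} ^ 'n) set \<Rightarrow> nat \<Rightarrow> bool" where
  "MWS C k \<longleftrightarrow> card {hweight c | c. c \<in> C \<and> c \<noteq> 0} = (CARD('a) ^ k - 1) div (CARD('a) - 1)"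

definition propertyA :: "('a::field ^ 'n) set \<Rightarrow> bool" where
  "propertyA C \<longleftrightarrow> (\<exists>\<beta>::'a. \<beta> \<noteq> 0 \<and>
      (\<forall>a\<in>C. \<forall>b\<in>C. symcount a \<beta> = symcount b \<beta> \<longrightarrow> a = b))"

end

theory Submission imports Defs begin

lemma card_code:
  fixes C :: "('a::{finite,field} ^ 'n) set"
  assumes "vec.subspace C" "vec.dim C = k"
  shows "CARD('a) ^ k \<le> card C"
proof -
  obtain B where B: "B \<subseteq> C" "vec.independent B" "C \<subseteq> vec.span B" "card B = vec.dim C"
    by (meson vec.basis_exists)
  have fB: "finite B" by simp
  define F where "F = (\<lambda>u::('a ^ 'n) \<Rightarrow> 'a. \<Sum>v\<in>B. u v *s v)"
  have inj: "inj_on F (B \<rightarrow>\<^sub>E (UNIV::'a set))"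
  proof (rule inj_onI)
    fix u w assume u: "u \<in> B \<rightarrow>\<^sub>E UNIV" and w: "w \<in> B \<rightarrow>\<^sub>E UNIV" and e: "F u = F w"
    have "(\<Sum>v\<in>B. (u v - w v) *s v) = F u - F w"
      unfolding F_def by (simp add: scaleR_diff_left sum_subtractf vector_ssub_ldistrib vec.scale_left_diff_distrib)
    also have "\<dots> = 0" using e by simp
    finally have z: "(\<Sum>v\<in>B. (u v - w v) *s v) = 0" .
    have "\<forall>v\<in>B. u v - w v = 0"
    proof (rule ccontr)
      assume "\<not> (\<forall>v\<in>B. u v - w v = 0)"
      then have "(\<exists>v\<in>B. (\<lambda>v. u v - w v) v \<noteq> 0) \<and> (\<Sum>v\<in>B. (\<lambda>v. u v - w v) v *s v) = 0"
        using z by simp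
      then have "vec.dependent B"
        unfolding vec.dependent_finite[OF fB] by (rule exI[of _ "\<lambda>v. u v - w v"])
      with B(2) show False by simp
    qed
    then show "u = w" using u w by (auto simp: PiE_def extensional_def fun_eq_iff)
  qed
  have sub: "F ` (B \<rightarrow>\<^sub>E UNIV) \<subseteq> C"
  proof
    fix x assume "x \<in> F ` (B \<rightarrow>\<^sub>E UNIV)"
    then obtain u where xu: "x = F u" by blast
    have "F u \<in> vec.span B" unfolding F_def
      by (intro vec.span_sum vec.span_scale vec.span_base)
    then have "x \<in> vec.span B" using xu by simp
    moreover have "vec.span B \<subseteq> C" using B(1) assms(1) by (simp add: vec.span_minimal)
    ultimately show "x \<in> C" by blast
  qed
  have "card (B \<rightarrow>\<^sub>E (UNIV::'a set)) = CARD('a) ^ k"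
    using B(4) assms(2) by (simp add: card_PiE)
  moreover have "card (B \<rightarrow>\<^sub>E (UNIV::'a set)) \<le> card C"
    using card_inj_on_le[OF inj sub] by simp
  ultimately show ?thesis by simp
qed

lemma sum_distinct_pos:
  fixes T :: "nat set"
  assumes "finite T" "0 \<notin> T"
  shows "card T * (card T + 1) \<le> 2 * \<Sum>T"
  using assms
proof (induction "card T" arbitrary: T)
  case 0 then show ?case by simp
next
  case (Suc m)
  then have ne: "T \<noteq> {}" by auto
  define M where "M = Max T"
  have MT: "M \<in> T" using Suc ne M_def by simp
  have "T \<subseteq> {1..M}" using Suc M_def by (auto simp: Suc_le_eq intro!: Max_ge) (metis gr0I)
  then have "card T \<le> M" using card_mono[of "{1..M}" T] by simp
  have IH: "card (T - {M}) * (card (T - {M}) + 1) \<le> 2 * \<Sum>(T - {M})"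
    using Suc.hyps(1)[of "T - {M}"] Suc.prems Suc.hyps(2) MT by auto
  have s: "\<Sum>T = M + \<Sum>(T - {M})" using Suc MT by (simp add: sum.remove)
  have c: "card (T - {M}) = m" using Suc MT by simp
  show ?case using IH s c \<open>card T \<le> M\<close> Suc(2)[symmetric] by (simp add: algebra_simps)
qed


lemma sum_ind: "finite A \<Longrightarrow> (\<Sum>x\<in>A. if P x then 1 else (0::nat)) = card {x\<in>A. P x}"
  by (simp add: sum.If_cases Int_def)

lemma final_ineq:
  fixes q Q n :: real
  assumes q: "q \<ge> 2" and Q: "Q \<ge> q" and h: "q * (Q - 1) \<le> 2 * n"
  shows "(q^2 * Q - 3 * q + 2) / (4 * (q - 1)) \<le> n"
proof -
  have a: "q * Q * (q - 2) \<ge> q * q * (q - 2)" using q Q by (intro mult_right_mono mult_left_mono) auto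
  have b: "(q - 1) * (q - 1) * (q - 2) \<ge> 0" using q by simp
  have "q^2 * Q - 3 * q + 2 \<le> 2 * (q - 1) * (q * (Q - 1))"
    using a b by (simp add: power2_eq_square algebra_simps)
  also have "\<dots> \<le> 2 * (q - 1) * (2 * n)" using h q by (intro mult_left_mono) auto
  finally show ?thesis using q by (simp add: pos_divide_le_eq algebra_simps)
qed

theorem mainTheorem11:
  fixes C :: "('a::{finite,field} ^ 'n) set" and k :: nat
  assumes "linear_code C k"
    and "k \<ge> 1"
    and "k \<ge> 2 \<longrightarrow> nondegenerate C"
    and "MWS C k"
    and "propertyA C"
  shows "int CARD('n) \<ge>
    \<lceil>(real CARD('a) ^ (k + 2) - 3 * real CARD('a) + 2) / (4 * (real CARD('a) - 1))\<rceil>"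
proof -
  define q where "q = CARD('a)"
  define n where "n = CARD('n)"
  define N where "N = card C"
  have sub: "vec.subspace C" and dim: "vec.dim C = k" using assms(1) by (auto simp: linear_code_def)
  obtain \<beta> :: 'a where b0: "\<beta> \<noteq> 0" and binj: "\<forall>a\<in>C. \<forall>b\<in>C. symcount a \<beta> = symcount b \<beta> \<longrightarrow> a = b"
    using assms(5) unfolding propertyA_def by blast
  define f :: "'a ^ 'n \<Rightarrow> nat" where "f = (\<lambda>c. symcount c \<beta>)"
  have fC: "finite C" by simp
  have zC: "0 \<in> C" using sub by (rule vec.subspace_0)
  have f0: "f 0 = 0" using b0 by (simp add: f_def symcount_def)
  have hN: "q ^ k \<le> N" unfolding q_def N_def using card_code[OF sub dim] .
  have q2: "q \<ge> 2"
  proof -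
    have "{0::'a, 1} \<subseteq> UNIV" by simp
    then have "card {0::'a, 1} \<le> q" unfolding q_def by (rule card_mono[rotated]) simp
    then show ?thesis by simp
  qed
  have injf: "inj_on f C" using binj unfolding f_def by (auto intro: inj_onI)
  define T where "T = f ` (C - {0})"
  have cT: "card T = N - 1" unfolding T_def N_def
    using card_image[OF inj_on_subset[OF injf, of "C - {0}"]] zC fC by auto
  have T0: "0 \<notin> T"
  proof
    assume "0 \<in> T"
    then obtain c where c: "0 = f c" "c \<in> C - {0}" unfolding T_def by (rule imageE)
    then have "f c = f 0" using f0 by simp
    then have "c = 0" using injf c(2) zC by (auto dest: inj_onD)
    then show False using c(2) by simp
  qed
  have "card T * (card T + 1) \<le> 2 * \<Sum>T" using sum_distinct_pos[OF _ T0] T_def by simp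
  moreover have "\<Sum>T = (\<Sum>c\<in>C - {0}. f c)" unfolding T_def
    using sum.reindex[OF inj_on_subset[OF injf, of "C - {0}"], of "\<lambda>x. x"] by auto
  moreover have "(\<Sum>c\<in>C - {0}. f c) = (\<Sum>c\<in>C. f c)"
    using sum.remove[OF fC zC, of f] f0 by simp
  moreover have Npos: "N > 0" using fC zC N_def card_gt_0_iff by blast
  ultimately have low: "(N - 1) * N \<le> 2 * (\<Sum>c\<in>C. f c)"
    using cT by simp
  have swap: "(\<Sum>c\<in>C. f c) = (\<Sum>i\<in>(UNIV::'n set). card {c\<in>C. c $ i = \<beta>})"
  proof -
    have "(\<Sum>c\<in>C. f c) = (\<Sum>c\<in>C. \<Sum>i\<in>(UNIV::'n set). if c $ i = \<beta> then 1 else 0)"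
      by (simp add: f_def symcount_def sum_ind)
    also have "\<dots> = (\<Sum>i\<in>(UNIV::'n set). \<Sum>c\<in>C. if c $ i = \<beta> then 1 else 0)"
      by (rule sum.swap)
    also have "\<dots> = (\<Sum>i\<in>(UNIV::'n set). card {c\<in>C. c $ i = \<beta>})"
      by (simp add: sum_ind)
    finally show ?thesis .
  qed
  have fib: "q * card {c\<in>C. c $ i = \<beta>} \<le> N" for i
  proof (cases "{c\<in>C. c $ i = \<beta>} = {}")
    case True
    then have "card {c\<in>C. c $ i = \<beta>} = 0" by (simp only: card.empty)
    then show ?thesis by (metis mult_0_right le0)
  next
    case False
    then obtain c0 where c0: "c0 \<in> C" "c0 $ i = \<beta>" by auto
    have le: "card {c\<in>C. c $ i = \<beta>} \<le> card {c\<in>C. c $ i = \<gamma>}" for \<gamma>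
    proof -
      define g where "g = (\<lambda>c. c + ((\<gamma> - \<beta>) / \<beta>) *s c0)"
      have inj: "inj_on g {c\<in>C. c $ i = \<beta>}" by (simp add: inj_on_def g_def)
      have img: "g ` {c\<in>C. c $ i = \<beta>} \<subseteq> {c\<in>C. c $ i = \<gamma>}"
      proof
        fix x assume "x \<in> g ` {c\<in>C. c $ i = \<beta>}"
        then obtain c where c: "c \<in> C" "c $ i = \<beta>" and x: "x = g c" by blast
        have s1: "((\<gamma> - \<beta>) / \<beta>) *s c0 \<in> C" by (rule vec.subspace_scale[OF sub c0(1)])
        have "x \<in> C" unfolding x g_def by (rule vec.subspace_add[OF sub c(1) s1])
        moreover have "x $ i = \<beta> + (\<gamma> - \<beta>) / \<beta> * \<beta>"
          unfolding x g_def using c(2) c0(2) by simp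
        then have "x $ i = \<gamma>" using b0 by simp
        ultimately show "x \<in> {c\<in>C. c $ i = \<gamma>}" by simp
      qed
      show ?thesis by (rule card_inj_on_le[OF inj img]) simp
    qed
    have "q * card {c\<in>C. c $ i = \<beta>} = (\<Sum>\<gamma>\<in>(UNIV::'a set). card {c\<in>C. c $ i = \<beta>})"
      by (simp add: q_def)
    also have "\<dots> \<le> (\<Sum>\<gamma>\<in>(UNIV::'a set). card {c\<in>C. c $ i = \<gamma>})"
      by (rule sum_mono) (rule le)
    also have "\<dots> = (\<Sum>\<gamma>\<in>(UNIV::'a set). \<Sum>c\<in>{c\<in>C. c $ i = \<gamma>}. (1::nat))"
      by simp
    also have "\<dots> = (\<Sum>c\<in>C. (1::nat))"
      by (rule sum.group) auto
    also have "\<dots> = N" by (simp add: N_def)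
    finally show ?thesis .
  qed
  have "q * (\<Sum>c\<in>C. f c) \<le> n * N"
  proof -
    have "q * (\<Sum>c\<in>C. f c) = (\<Sum>i\<in>(UNIV::'n set). q * card {c\<in>C. c $ i = \<beta>})"
      by (simp add: swap sum_distrib_left)
    also have "\<dots> \<le> (\<Sum>i\<in>(UNIV::'n set). N)" by (rule sum_mono) (rule fib)
    also have "\<dots> = n * N" by (simp add: n_def)
    finally show ?thesis .
  qed
  have "q * ((N - 1) * N) \<le> q * (2 * (\<Sum>c\<in>C. f c))"
    using low by (rule mult_left_mono) simp
  also have "\<dots> = 2 * (q * (\<Sum>c\<in>C. f c))" by simp
  also have "\<dots> \<le> 2 * (n * N)" using \<open>q * (\<Sum>c\<in>C. f c) \<le> n * N\<close> by simp
  finally have "(q * (N - 1)) * N \<le> (2 * n) * N" by (simp add: mult.assoc)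
  then have qn: "q * (N - 1) \<le> 2 * n" using Npos by simp
  have "real (q * (N - 1)) \<le> real (2 * n)" using qn by (simp only: of_nat_le_iff)
  then have "real q * (real N - 1) \<le> 2 * real n" using Npos by (simp add: of_nat_diff)
  moreover have "real q ^ k \<ge> real q"
    using q2 assms(2) by (simp add: power_increasing[of 1 k "real q", simplified])
  moreover have "real q ^ k \<le> real N" using hN by (metis of_nat_le_iff of_nat_power)
  ultimately have "real q * (real q ^ k - 1) \<le> 2 * real n"
  proof -
    have "real q * (real q ^ k - 1) \<le> real q * (real N - 1)"
      using \<open>real q ^ k \<le> real N\<close> by (intro mult_left_mono) auto
    then show ?thesis using \<open>real q * (real N - 1) \<le> 2 * real n\<close> by linarith
  qed
  then have "(real q ^ 2 * real q ^ k - 3 * real q + 2) / (4 * (real q - 1)) \<le> real n"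
    using final_ineq[of "real q" "real q ^ k" "real n"] q2 \<open>real q ^ k \<ge> real q\<close> by simp
  then have "(real q ^ (k + 2) - 3 * real q + 2) / (4 * (real q - 1)) \<le> real n"
    using power_add[of "real q" k 2] by (simp only: mult.commute)
  then show ?thesis unfolding q_def n_def by (simp add: ceiling_le_iff)
qed

end
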